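(* Let $B_i\colon\mathbb{R}^d\to\mathbb{R}^{d_i}$ be surjective linear maps, $c_i>0$ with $\mathrm{BL}(\mathbf{B},\mathbf{c})<\infty$, and $\theta_i>0$ with $\sum_i\theta_i=1$. Let $0<p\le1$ and define $p_i$ by $c_i(1-\frac1p)=\theta_i(1-\frac1{p_i})$. Let $f=1_\Omega$ be the indicator function of a bounded measurable set $\Omega\subseteq\mathbb{R}^d$ of positive measure, and $f_i:=(B_i)_*f$. Then $$H\!\left(\frac{f^p}{\|f\|_p^p}\right)\le\log\mathrm{BL}(\mathbf{B},\mathbf{c})+\sum_{i=1}^kc_iH\!\left(\frac{f_i^{p_i}}{\|f_i\|_{p_i}^{p_i}}\right).$$
   Context: $\mathrm{BL}(\mathbf{B},\mathbf{c})$ is the best constant in $\int_{\mathbb{R}^d}\prod_if_i(B_ix)^{c_i}dx\le\mathrm{BL}\prod_i(\int f_i)^{c_i}$ over non-negative integrable $f_i$. The pushforward $B_*f$ is defined by $\int B_*f\cdot F=\int f\cdot F\circ B$ for all measurable $F\ge0$. For a probability density $g$, $H(g):=\int g\log\frac1g$. *)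

theory Defs
  imports "HOL-Analysis.Analysis"
begin

definition lebn :: "nat \<Rightarrow> (nat \<Rightarrow> real) measure" where
  "lebn n = Pi\<^sub>M {..<n} (\<lambda>_. lborel)"

definition matapp :: "nat \<Rightarrow> nat \<Rightarrow> (nat \<Rightarrow> nat \<Rightarrow> real) \<Rightarrow> (nat \<Rightarrow> real) \<Rightarrow> (nat \<Rightarrow> real)" where
  "matapp d m M x = restrict (\<lambda>j. \<Sum>l<d. M j l * x l) {..<m}"

definition BL :: "nat \<Rightarrow> nat \<Rightarrow> (nat \<Rightarrow> nat) \<Rightarrow> (nat \<Rightarrow> nat \<Rightarrow> nat \<Rightarrow> real) \<Rightarrow> (nat \<Rightarrow> real) \<Rightarrow> ennreal" where
  "BL d k dd B c = Inf {C. \<forall>f :: nat \<Rightarrow> (nat \<Rightarrow> real) \<Rightarrow> real.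
     (\<forall>i<k. integrable (lebn (dd i)) (f i) \<and> (\<forall>y\<in>space (lebn (dd i)). 0 \<le> f i y)) \<longrightarrow>
     (\<integral>\<^sup>+ x. ennreal (\<Prod>i<k. f i (matapp d (dd i) (B i) x) powr c i) \<partial>lebn d)
       \<le> C * ennreal (\<Prod>i<k. (\<integral> y. f i y \<partial>lebn (dd i)) powr c i)}"

text \<open>Entropy H(g) = int g log(1/g) (with the convention 0 log(1/0) = 0).\<close>
definition Hent :: "'a measure \<Rightarrow> ('a \<Rightarrow> real) \<Rightarrow> real" where
  "Hent M g = (\<integral> x. g x * ln (1 / g x) \<partial>M)"

end

theory Submission
  imports Defs
begin




lemma push_nn:
  fixes M :: "'a measure" and N :: "'b measure"
  assumes g: "g \<in> borel_measurable N" "\<forall>y\<in>space N. 0 \<le> g y"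
    and Bm: "B \<in> measurable M N" and Om: "\<Omega> \<in> sets M"
    and push: "\<forall>F\<in>borel_measurable N. (\<integral>\<^sup>+ y. ennreal (g y) * F y \<partial>N) = (\<integral>\<^sup>+ x. indicator \<Omega> x * F (B x) \<partial>M)"
    and h: "h \<in> borel_measurable N"
  shows "(\<integral>\<^sup>+ y. ennreal (g y * h y) \<partial>N) = (\<integral>\<^sup>+ x. ennreal (indicator \<Omega> x * h (B x)) \<partial>M)"
proof -
  have "(\<integral>\<^sup>+ y. ennreal (g y * h y) \<partial>N) = (\<integral>\<^sup>+ y. ennreal (g y) * ennreal (h y) \<partial>N)"
    using g(2) by (intro nn_integral_cong) (simp add: ennreal_mult')
  also have "\<dots> = (\<integral>\<^sup>+ x. indicator \<Omega> x * ennreal (h (B x)) \<partial>M)"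
    using push h by auto
  also have "\<dots> = (\<integral>\<^sup>+ x. ennreal (indicator \<Omega> x * h (B x)) \<partial>M)"
    by (intro nn_integral_cong) (simp split: split_indicator)
  finally show ?thesis .
qed

lemma push_real:
  fixes M :: "'a measure" and N :: "'b measure"
  assumes g: "g \<in> borel_measurable N" "\<forall>y\<in>space N. 0 \<le> g y"
    and Bm: "B \<in> measurable M N" and Om: "\<Omega> \<in> sets M"
    and push: "\<forall>F\<in>borel_measurable N. (\<integral>\<^sup>+ y. ennreal (g y) * F y \<partial>N) = (\<integral>\<^sup>+ x. indicator \<Omega> x * F (B x) \<partial>M)"
    and h: "h \<in> borel_measurable N"
  shows "integrable N (\<lambda>y. g y * h y) \<longleftrightarrow> integrable M (\<lambda>x. indicator \<Omega> x * h (B x))"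
    and "(\<integral> y. g y * h y \<partial>N) = (\<integral> x. indicator \<Omega> x * h (B x) \<partial>M)"
proof -
  have m1: "(\<lambda>y. g y * h y) \<in> borel_measurable N" using g h by measurable
  have m2: "(\<lambda>x. indicator \<Omega> x * h (B x)) \<in> borel_measurable M"
    using Om Bm h by measurable
  have P: "(\<integral>\<^sup>+ y. ennreal (g y * h y) \<partial>N) = (\<integral>\<^sup>+ x. ennreal (indicator \<Omega> x * h (B x)) \<partial>M)"
    by (rule push_nn[OF g Bm Om push h])
  have Q: "(\<integral>\<^sup>+ y. ennreal (- (g y * h y)) \<partial>N) = (\<integral>\<^sup>+ x. ennreal (- (indicator \<Omega> x * h (B x))) \<partial>M)"
    using push_nn[OF g Bm Om push, of "\<lambda>y. - h y"] h by simp
  have A: "(\<integral>\<^sup>+ y. ennreal (norm (g y * h y)) \<partial>N) = (\<integral>\<^sup>+ x. ennreal (norm (indicator \<Omega> x * h (B x))) \<partial>M)"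
  proof -
    have "(\<integral>\<^sup>+ y. ennreal (norm (g y * h y)) \<partial>N) = (\<integral>\<^sup>+ y. ennreal (g y * \<bar>h y\<bar>) \<partial>N)"
      using g(2) by (intro nn_integral_cong) (simp add: abs_mult)
    also have "\<dots> = (\<integral>\<^sup>+ x. ennreal (indicator \<Omega> x * \<bar>h (B x)\<bar>) \<partial>M)"
      using push_nn[OF g Bm Om push, of "\<lambda>y. \<bar>h y\<bar>"] h by simp
    also have "\<dots> = (\<integral>\<^sup>+ x. ennreal (norm (indicator \<Omega> x * h (B x))) \<partial>M)"
      by (intro nn_integral_cong) (simp split: split_indicator)
    finally show ?thesis .
  qed
  show I: "integrable N (\<lambda>y. g y * h y) \<longleftrightarrow> integrable M (\<lambda>x. indicator \<Omega> x * h (B x))"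
    unfolding integrable_iff_bounded using m1 m2 A by simp
  show "(\<integral> y. g y * h y \<partial>N) = (\<integral> x. indicator \<Omega> x * h (B x) \<partial>M)"
  proof cases
    assume i: "integrable N (\<lambda>y. g y * h y)"
    then have i2: "integrable M (\<lambda>x. indicator \<Omega> x * h (B x))" using I by simp
    show ?thesis
      using real_lebesgue_integral_def[OF i] real_lebesgue_integral_def[OF i2] P Q by simp
  next
    assume i: "\<not> integrable N (\<lambda>y. g y * h y)"
    then have i2: "\<not> integrable M (\<lambda>x. indicator \<Omega> x * h (B x))" using I by simp
    show ?thesis using not_integrable_integral_eq[OF i] not_integrable_integral_eq[OF i2] by simp
  qed
qed

lemma key_ineq:
  fixes s b m :: real
  assumes "0 < s" "s \<le> 1" "0 < b" "0 < m" "s = 1 \<Longrightarrow> b = m"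
  shows "\<exists>K. \<forall>g\<ge>0. 0 \<le> (g - m * (g powr s / b)) * (ln (g powr s / b) - K)"
proof (cases "s = 1")
  case True
  then show ?thesis using assms by (intro exI[of _ 0]) auto
next
  case False
  then have s1: "s < 1" using assms by simp
  define t0 where "t0 = (m / b) powr (1 / (1 - s))"
  have t0: "0 < t0" unfolding t0_def using assms by simp
  have t0e: "t0 powr (1 - s) = m / b" unfolding t0_def using assms s1
    by (simp add: powr_powr)
  show ?thesis
  proof (intro exI[of _ "ln (t0 powr s / b)"] allI impI)
    fix g :: real assume g: "0 \<le> g"
    show "0 \<le> (g - m * (g powr s / b)) * (ln (g powr s / b) - ln (t0 powr s / b))"
    proof (cases "g = 0")
      case True then show ?thesis by simp
    next
      case False
      then have gp: "0 < g" using g by simp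
      have eq1: "g - m * (g powr s / b) = g powr s * (g powr (1 - s) - m / b)"
        using gp assms by (simp add: algebra_simps powr_diff powr_realpow) 
      have eq2: "ln (g powr s / b) - ln (t0 powr s / b) = s * (ln g - ln t0)"
        using gp t0 assms by (simp add: ln_div ln_powr algebra_simps)
      show ?thesis
      proof (cases "g \<ge> t0")
        case True
        then have "g powr (1 - s) \<ge> t0 powr (1 - s)" using t0 s1 by (intro powr_mono2) auto
        moreover have "ln g \<ge> ln t0" using True t0 by simp
        ultimately show ?thesis unfolding eq1 eq2 t0e using assms gp
          by (intro mult_nonneg_nonneg) auto
      next
        case False
        then have "g powr (1 - s) \<le> t0 powr (1 - s)" using gp s1 by (intro powr_mono2) auto
        moreover have "ln g \<le> ln t0" using False gp by simp
        ultimately have "g powr (1 - s) - m / b \<le> 0" "s * (ln g - ln t0) \<le> 0"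
          unfolding t0e using assms by (auto simp: mult_nonneg_nonpos)
        then have "0 \<le> (g powr (1 - s) - m / b) * (s * (ln g - ln t0))"
          by (rule mult_nonpos_nonpos)
        then show ?thesis unfolding eq1 eq2 by (simp add: mult.assoc)
      qed
    qed
  qed
qed


lemma r3: fixes q :: real assumes "0 \<le> q" shows "q * ln q \<ge> -1"
proof (cases "q = 0")
  case False
  then have qp: "0 < q" using assms by simp
  have "ln q \<ge> 1 - 1/q" using qp ln_le_minus_one[of "1/q"] by (simp add: ln_div)
  then have "q * ln q \<ge> q * (1 - 1/q)" using qp by (intro mult_left_mono) auto
  moreover have "q * (1 - 1/q) = q - 1" using qp by (simp add: field_simps)
  ultimately show ?thesis using qp by linarith
qed simp

lemma r1: fixes g s :: real assumes "0 \<le> g" "0 < s" "s \<le> 1" shows "g powr s \<le> 1 + g"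
proof (cases "g \<le> 1")
  case True
  then have "g powr s \<le> 1 powr s" using assms by (intro powr_mono2) auto
  then show ?thesis using assms by simp
next
  case False
  then have "g powr s \<le> g powr 1" using assms by (intro powr_mono) auto
  then show ?thesis using False by simp
qed

lemma r2: fixes g s Z :: real assumes "0 \<le> g" "0 < s" "s \<le> 1" "0 < Z"
  shows "g * max 0 (- ln (g powr s / Z)) \<le> Z powr (1/s) * \<bar>ln Z\<bar> + 1"
proof (cases "g = 0 \<or> g powr s / Z \<ge> 1")
  case True
  have "0 \<le> Z powr (1/s) * \<bar>ln Z\<bar> + 1" by simp
  moreover have "g * max 0 (- ln (g powr s / Z)) = 0"
  proof (cases "g = 0")
    case False
    then have "g powr s / Z \<ge> 1" using True by simp
    then have "ln (g powr s / Z) \<ge> 0" by simp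
    then show ?thesis by simp
  qed simp
  ultimately show ?thesis by linarith
next
  case False
  then have gp: "0 < g" and q1: "g powr s < Z" using assms by auto
  have "g = (g powr s) powr (1/s)" using gp assms by (simp add: powr_powr)
  also have "\<dots> < Z powr (1/s)" using q1 gp assms by (intro powr_less_mono2) auto
  finally have gl: "g < Z powr (1/s)" .
  have e: "- ln (g powr s / Z) = ln Z - s * ln g" using gp assms by (simp add: ln_div ln_powr)
  have lg: "- (g * ln g) \<le> 1" using r3[of g] gp by simp
  have "g * max 0 (- ln (g powr s / Z)) \<le> \<bar>g * ln Z\<bar> + s * (- (g * ln g))"
  proof -
    have "ln (g powr s) < ln Z" using q1 gp assms by (subst ln_less_cancel_iff) auto
    then have "s * ln g < ln Z" using gp by (simp add: ln_powr)
    then have "max 0 (ln Z - s * ln g) = ln Z - s * ln g" by simp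
    then show ?thesis unfolding e by (simp add: algebra_simps)
  qed
  also have "\<dots> \<le> Z powr (1/s) * \<bar>ln Z\<bar> + 1"
  proof -
    have "\<bar>g * ln Z\<bar> \<le> Z powr (1/s) * \<bar>ln Z\<bar>" using gl gp by (simp add: abs_mult mult_right_mono)
    moreover have "s * (- (g * ln g)) \<le> 1"
    proof (cases "- (g * ln g) \<ge> 0")
      case True then have "s * (- (g * ln g)) \<le> 1 * 1" using lg assms by (intro mult_mono) auto
      then show ?thesis by simp
    next
      case False then have "s * (- (g * ln g)) \<le> 0" using assms by (intro mult_nonneg_nonpos) auto
      then show ?thesis by simp
    qed
    ultimately show ?thesis by simp
  qed
  finally show ?thesis .
qed




lemma component:
  fixes M :: "'a measure" and N :: "'b measure" and g :: "'b \<Rightarrow> real"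
  assumes gm[measurable]: "g \<in> borel_measurable N" and gnn: "\<forall>y\<in>space N. 0 \<le> g y"
    and Bm[measurable]: "B \<in> measurable M N" and Om[measurable]: "\<Omega> \<in> sets M"
    and push: "\<forall>F\<in>borel_measurable N. (\<integral>\<^sup>+ y. ennreal (g y) * F y \<partial>N) = (\<integral>\<^sup>+ x. indicator \<Omega> x * F (B x) \<partial>M)"
    and mdef: "m = measure M \<Omega>" and mpos: "0 < m" and mfin: "emeasure M \<Omega> < \<infinity>"
    and s: "0 < s" "s \<le> 1"
    and Sm[measurable]: "S \<in> sets N" and Sfin: "emeasure N S < \<infinity>"
    and gS: "AE y in N. y \<notin> S \<longrightarrow> g y = 0"
    and Zdef: "Z = (\<integral> y. g y powr s \<partial>N)"
    and qdef: "q = (\<lambda>y. g y powr s / Z)"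
  shows "0 < Z" "q \<in> borel_measurable N" "integrable N q" "(\<integral> y. q y \<partial>N) = 1"
    "\<forall>y\<in>space N. 0 \<le> q y"
    "AE x in M. x \<in> \<Omega> \<longrightarrow> 0 < q (B x)"
    "integrable M (\<lambda>x. indicator \<Omega> x * max 0 (- ln (q (B x))))"
    "integrable M (\<lambda>x. indicator \<Omega> x * ln (q (B x))) \<Longrightarrow>
       (\<integral> x. indicator \<Omega> x * ln (q (B x)) \<partial>M) \<ge> - m * Hent N q"
proof -
  have nng: "(\<integral>\<^sup>+ y. ennreal (g y) \<partial>N) = emeasure M \<Omega>"
    using push[rule_format, of "\<lambda>_. 1"] by simp
  have ig: "integrable N g"
    using nng mfin gnn by (intro integrableI_nonneg) (auto intro: AE_I2)
  have intg: "(\<integral> y. g y \<partial>N) = m"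
    using integral_eq_nn_integral[of g N] nng gnn by (simp add: mdef measure_def AE_I2)
  have gs_m[measurable]: "(\<lambda>y. g y powr s) \<in> borel_measurable N" by measurable
  have igs: "integrable N (\<lambda>y. g y powr s)"
  proof (rule Bochner_Integration.integrable_bound[where f="\<lambda>y. g y + indicator S y"])
    show "integrable N (\<lambda>y. g y + indicator S y)" using ig Sfin by auto
    show "AE y in N. norm (g y powr s) \<le> norm (g y + indicator S y)"
      using gS AE_space
    proof eventually_elim
      case (elim y)
      then have "0 \<le> g y" using gnn by auto
      then show ?case using elim r1[of "g y" s] s by (auto split: split_indicator)
    qed
  qed simp
  show Zpos: "0 < Z"
  proof (rule ccontr)
    assume "\<not> 0 < Z"
    moreover have "0 \<le> Z" unfolding Zdef by (rule integral_nonneg_AE) simp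
    ultimately have "Z = 0" by simp
    then have "AE y in N. g y powr s = 0"
      using integral_nonneg_eq_0_iff_AE[OF igs] Zdef by (auto intro: AE_I2)
    then have "AE y in N. g y = 0" by simp
    then have "(\<integral> y. g y \<partial>N) = 0" by (simp add: integral_eq_zero_AE)
    then show False using intg mpos by simp
  qed
  show qm[measurable]: "q \<in> borel_measurable N" unfolding qdef by measurable
  show iq: "integrable N q" unfolding qdef using igs by simp
  show "(\<integral> y. q y \<partial>N) = 1" unfolding qdef using Zpos Zdef by simp
  show qnn: "\<forall>y\<in>space N. 0 \<le> q y" unfolding qdef using Zpos by simp
  have qpos_iff: "\<And>y. y \<in> space N \<Longrightarrow> 0 < q y \<longleftrightarrow> 0 < g y"
  proof -
    fix y assume y: "y \<in> space N"
    then have "0 \<le> g y" using gnn by auto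
    then show "0 < q y \<longleftrightarrow> 0 < g y" unfolding qdef using Zpos
      by (cases "g y = 0") (auto simp: divide_pos_pos)
  qed
  show "AE x in M. x \<in> \<Omega> \<longrightarrow> 0 < q (B x)"
  proof -
    let ?Y = "{y\<in>space N. g y = 0}"
    have Ym[measurable]: "?Y \<in> sets N" by measurable
    have "(\<integral>\<^sup>+ x. ennreal (indicator \<Omega> x * indicator ?Y (B x)) \<partial>M)
        = (\<integral>\<^sup>+ y. ennreal (g y * indicator ?Y y) \<partial>N)"
      by (rule push_nn[OF gm gnn Bm Om push, symmetric]) measurable
    also have "\<dots> = (\<integral>\<^sup>+ y. 0 \<partial>N)" by (intro nn_integral_cong) (auto split: split_indicator)
    also have "\<dots> = 0" by simp
    finally have "AE x in M. ennreal (indicator \<Omega> x * indicator ?Y (B x)) = 0"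
      by (subst (asm) nn_integral_0_iff_AE) auto
    then show ?thesis using AE_space
    proof eventually_elim
      case (elim x)
      then have Bx: "B x \<in> space N" using measurable_space[OF Bm] by auto
      show ?case
      proof
        assume "x \<in> \<Omega>"
        then have "g (B x) \<noteq> 0" using elim Bx by (auto split: split_indicator)
        then show "0 < q (B x)" using qpos_iff[OF Bx] gnn Bx by force
      qed
    qed
  qed
  define C where "C = Z powr (1/s) * \<bar>ln Z\<bar> + 1"
  show "integrable M (\<lambda>x. indicator \<Omega> x * max 0 (- ln (q (B x))))"
  proof -
    have "integrable N (\<lambda>y. g y * max 0 (- ln (q y)))"
    proof (rule Bochner_Integration.integrable_bound[where f="\<lambda>y. C * indicator S y"])
      show "integrable N (\<lambda>y. C * indicator S y)" using Sfin by simp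
      show "AE y in N. norm (g y * max 0 (- ln (q y))) \<le> norm (C * indicator S y)"
        using gS AE_space
      proof eventually_elim
        case (elim y)
        then have "0 \<le> g y" using gnn by auto
        moreover have "0 \<le> C" unfolding C_def by simp
        ultimately show ?case using elim r2[of "g y" s Z] s Zpos unfolding qdef C_def
          by (auto split: split_indicator)
      qed
    qed measurable
    then show ?thesis using push_real(1)[OF gm gnn Bm Om push, of "\<lambda>y. max 0 (- ln (q y))"] by simp
  qed
  assume iL: "integrable M (\<lambda>x. indicator \<Omega> x * ln (q (B x)))"
  have iGL: "integrable N (\<lambda>y. g y * ln (q y))" and eqGL: "(\<integral> y. g y * ln (q y) \<partial>N) = (\<integral> x. indicator \<Omega> x * ln (q (B x)) \<partial>M)"
    using push_real[OF gm gnn Bm Om push, of "\<lambda>y. ln (q y)"] iL by auto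
  have Zm: "s = 1 \<Longrightarrow> Z = m"
  proof -
    assume s1: "s = 1"
    have "Z = (\<integral> y. g y \<partial>N)" unfolding Zdef s1 using gnn by (intro Bochner_Integration.integral_cong) auto
    then show "Z = m" using intg by simp
  qed
  obtain K where K: "\<And>t. t \<ge> 0 \<Longrightarrow> 0 \<le> (t - m * (t powr s / Z)) * (ln (t powr s / Z) - K)"
    using key_ineq[of s Z m] s Zpos mpos Zm by blast
  define \<phi> where "\<phi> = (\<lambda>y. g y * ln (q y) - K * g y + K * m * q y)"
  have iphi: "integrable N \<phi>" unfolding \<phi>_def using iGL ig iq by auto
  have phi_ge: "\<And>y. y \<in> space N \<Longrightarrow> m * (q y * ln (q y)) \<le> \<phi> y"
  proof -
    fix y assume y: "y \<in> space N"
    have "0 \<le> (g y - m * q y) * (ln (q y) - K)" using K[of "g y"] gnn y unfolding qdef by auto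
    then show "m * (q y * ln (q y)) \<le> \<phi> y" unfolding \<phi>_def by (simp add: algebra_simps)
  qed
  have iqlq: "integrable N (\<lambda>y. q y * ln (q y))"
  proof (rule Bochner_Integration.integrable_bound[where f="\<lambda>y. \<bar>\<phi> y\<bar> / m + indicator S y"])
    show "integrable N (\<lambda>y. \<bar>\<phi> y\<bar> / m + indicator S y)" using Sfin iphi by auto
    show "AE y in N. norm (q y * ln (q y)) \<le> norm (\<bar>\<phi> y\<bar> / m + indicator S y)"
      using gS AE_space
    proof eventually_elim
      case (elim y)
      show ?case
      proof (cases "y \<in> S")
        case True
        have "q y * ln (q y) \<le> \<phi> y / m" using phi_ge[OF elim(2)] mpos by (simp add: field_simps)
        moreover have "q y * ln (q y) \<ge> -1" using r3 qnn elim(2) by auto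
        moreover have "\<phi> y / m \<le> \<bar>\<phi> y\<bar> / m" using mpos by (simp add: divide_right_mono)
        moreover have "0 \<le> \<bar>\<phi> y\<bar> / m" using mpos by simp
        ultimately show ?thesis using True by (simp add: abs_le_iff)
      next
        case False
        then have "q y = 0" using elim unfolding qdef using s by auto
        then show ?thesis by simp
      qed
    qed
  qed measurable
  have "(\<integral> y. m * (q y * ln (q y)) \<partial>N) \<le> (\<integral> y. \<phi> y \<partial>N)"
    using iqlq iphi phi_ge by (intro integral_mono) auto
  also have "(\<integral> y. \<phi> y \<partial>N) = (\<integral> y. g y * ln (q y) \<partial>N) - K * m + K * m * 1"
    unfolding \<phi>_def using iGL ig iq intg \<open>(\<integral> y. q y \<partial>N) = 1\<close> by simp
  finally have A: "m * (\<integral> y. q y * ln (q y) \<partial>N) \<le> (\<integral> y. g y * ln (q y) \<partial>N)" by simp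
  have "Hent N q = - (\<integral> y. q y * ln (q y) \<partial>N)"
  proof -
    have "\<And>y. q y * ln (1 / q y) = - (q y * ln (q y))" by (simp add: ln_div)
    then show ?thesis unfolding Hent_def by simp
  qed
  then show "(\<integral> x. indicator \<Omega> x * ln (q (B x)) \<partial>M) \<ge> - m * Hent N q"
    using A eqGL by simp
qed


lemma space_lebn: "space (lebn n) = PiE {..<n} (\<lambda>_. UNIV)"
  by (simp add: lebn_def space_PiM)

lemma matapp_meas[measurable]: "matapp d m A \<in> measurable (lebn d) (lebn m)"
  unfolding matapp_def lebn_def by measurable

lemma box_sets: "PiE {..<n} (\<lambda>_. {-R..R::real}) \<in> sets (lebn n)"
  unfolding lebn_def by (intro sets_PiM_I_finite) auto

lemma box_fin: "emeasure (lebn n) (PiE {..<n} (\<lambda>_. {-R..R::real})) < \<infinity>"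
proof -
  interpret product_sigma_finite "\<lambda>_::nat. lborel :: real measure"
    by (simp add: product_sigma_finite_def lborel.sigma_finite_measure_axioms)
  have "emeasure (lebn n) (PiE {..<n} (\<lambda>_. {-R..R::real})) = (\<Prod>i<n. emeasure lborel {-R..R})"
    unfolding lebn_def by (intro emeasure_PiM) auto
  also have "\<dots> < \<infinity>" by (simp add: less_top ennreal_prod_eq_top emeasure_lborel_Icc_eq ennreal_power[symmetric] power_less_top_ennreal)
  finally show ?thesis .
qed



theorem proposition5p4:
  fixes d k :: nat and dd :: "nat \<Rightarrow> nat" and B :: "nat \<Rightarrow> nat \<Rightarrow> nat \<Rightarrow> real"
    and c \<theta> pp :: "nat \<Rightarrow> real" and p :: real and \<Omega> :: "(nat \<Rightarrow> real) set"
    and g :: "nat \<Rightarrow> (nat \<Rightarrow> real) \<Rightarrow> real"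
  assumes surj: "\<forall>i<k. matapp d (dd i) (B i) ` space (lebn d) = space (lebn (dd i))"
    and c_pos: "\<forall>i<k. 0 < c i"
    and BL_fin: "BL d k dd B c < \<infinity>"
    and theta_pos: "\<forall>i<k. 0 < \<theta> i"
    and theta_sum: "(\<Sum>i<k. \<theta> i) = 1"
    and p: "0 < p" "p \<le> 1"
    and pp: "\<forall>i<k. c i * (1 - 1 / p) = \<theta> i * (1 - 1 / pp i)"
    and \<Omega>_meas: "\<Omega> \<in> sets (completion (lebn d))"
    and \<Omega>_bdd: "\<exists>R. \<forall>x\<in>\<Omega>. \<forall>j<d. \<bar>x j\<bar> \<le> R"
    and \<Omega>_pos: "0 < emeasure (completion (lebn d)) \<Omega>"
    and g_meas: "\<forall>i<k. g i \<in> borel_measurable (lebn (dd i))"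
    and g_nonneg: "\<forall>i<k. \<forall>y\<in>space (lebn (dd i)). 0 \<le> g i y"
    and g_push: "\<forall>i<k. \<forall>F \<in> borel_measurable (lebn (dd i)).
        (\<integral>\<^sup>+ y. ennreal (g i y) * F y \<partial>lebn (dd i))
          = (\<integral>\<^sup>+ x. indicator \<Omega> x * F (matapp d (dd i) (B i) x) \<partial>completion (lebn d))"
  shows "Hent (completion (lebn d))
           (\<lambda>x. (indicator \<Omega> x :: real) powr p
                 / (\<integral> z. (indicator \<Omega> z :: real) powr p \<partial>completion (lebn d)))
         \<le> ln (enn2real (BL d k dd B c))
           + (\<Sum>i<k. c i * Hent (lebn (dd i))
                (\<lambda>y. g i y powr pp i / (\<integral> z. g i z powr pp i \<partial>lebn (dd i))))"
proof -
  define M where "M = completion (lebn d)"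
  define N where "N = (\<lambda>i. lebn (dd i))"
  define Bf where "Bf = (\<lambda>i. matapp d (dd i) (B i))"
  define Z where "Z = (\<lambda>i. \<integral> z. g i z powr pp i \<partial>lebn (dd i))"
  define q where "q = (\<lambda>i y. g i y powr pp i / Z i)"
  define m where "m = measure M \<Omega>"
  have Om[measurable]: "\<Omega> \<in> sets M" using \<Omega>_meas unfolding M_def .
  have Bf_meas[measurable]: "\<And>i. Bf i \<in> measurable M (N i)"
    unfolding M_def N_def Bf_def by (rule measurable_completion) (rule matapp_meas)
  have spM: "space M = space (lebn d)" unfolding M_def by simp
  obtain R where R: "\<forall>x\<in>\<Omega>. \<forall>j<d. \<bar>x j\<bar> \<le> R" using \<Omega>_bdd by blast
  have Osub: "\<Omega> \<subseteq> space M" using sets.sets_into_space[OF Om] .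
  have mfin: "emeasure M \<Omega> < \<infinity>"
  proof -
    have "\<Omega> \<subseteq> PiE {..<d} (\<lambda>_. {-R..R})"
    proof
      fix x assume x: "x \<in> \<Omega>"
      then have "x \<in> PiE {..<d} (\<lambda>_. UNIV)" using Osub unfolding spM space_lebn by auto
      moreover have "\<forall>j<d. x j \<in> {-R..R}"
      proof (intro allI impI)
        fix j assume "j < d"
        then have "\<bar>x j\<bar> \<le> R" using R x by blast
        then show "x j \<in> {-R..R}" by (simp add: abs_le_iff)
      qed
      ultimately show "x \<in> PiE {..<d} (\<lambda>_. {-R..R})" by (auto simp: PiE_iff)
    qed
    then have "emeasure M \<Omega> \<le> emeasure M (PiE {..<d} (\<lambda>_. {-R..R}))"
      using box_sets[of d R] unfolding M_def by (intro emeasure_mono) auto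
    also have "\<dots> = emeasure (lebn d) (PiE {..<d} (\<lambda>_. {-R..R}))"
      using box_sets[of d R] unfolding M_def by simp
    also have "\<dots> < \<infinity>" by (rule box_fin)
    finally show ?thesis .
  qed
  have mpos: "0 < m" unfolding m_def measure_def using mfin \<Omega>_pos unfolding M_def
    by (simp add: enn2real_positive_iff)
  have memM: "emeasure M \<Omega> = ennreal m" unfolding m_def using mfin by (simp add: emeasure_eq_ennreal_measure)

  have ppr: "\<And>i. i < k \<Longrightarrow> 0 < pp i \<and> pp i \<le> 1"
  proof -
    fix i assume i: "i < k"
    have e: "c i * (1 - 1/p) = \<theta> i * (1 - 1/pp i)" and ci: "0 < c i" and ti: "0 < \<theta> i"
      using pp c_pos theta_pos i by auto
    have "1 - 1/p \<le> 0" using p by (simp add: field_simps)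
    then have "c i * (1 - 1/p) \<le> 0" using ci by (simp add: mult_nonneg_nonpos)
    then have "\<theta> i * (1 - 1/pp i) \<le> 0" using e by simp
    then have A: "1 - 1/pp i \<le> 0" using ti by (simp add: mult_le_0_iff)
    then have B: "1 \<le> 1 / pp i" by simp
    have "0 < pp i"
    proof (rule ccontr)
      assume "\<not> 0 < pp i"
      then have "pp i \<le> 0" by simp
      then have "1 / pp i \<le> 0" using divide_le_0_iff[of 1 "pp i"] by simp
      then show False using B by linarith
    qed
    moreover have "pp i \<le> 1" using B \<open>0 < pp i\<close> by (simp add: le_divide_eq_1)
    ultimately show "0 < pp i \<and> pp i \<le> 1" by simp
  qed
  define Rb where "Rb = (\<lambda>i. (\<Sum>j<dd i. \<Sum>l<d. \<bar>B i j l\<bar>) * \<bar>R\<bar>)"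
  define S where "S = (\<lambda>i. PiE {..<dd i} (\<lambda>_. {- Rb i..Rb i}))"
  have BfS: "\<And>i x. x \<in> \<Omega> \<Longrightarrow> Bf i x \<in> S i"
  proof -
    fix i x assume x: "x \<in> \<Omega>"
    have "\<forall>j<dd i. \<bar>\<Sum>l<d. B i j l * x l\<bar> \<le> Rb i"
    proof (intro allI impI)
      fix j assume j: "j < dd i"
      have "\<bar>\<Sum>l<d. B i j l * x l\<bar> \<le> (\<Sum>l<d. \<bar>B i j l\<bar> * \<bar>R\<bar>)"
      proof -
        have "\<bar>\<Sum>l<d. B i j l * x l\<bar> \<le> (\<Sum>l<d. \<bar>B i j l * x l\<bar>)" by (rule sum_abs)
        also have "\<dots> \<le> (\<Sum>l<d. \<bar>B i j l\<bar> * \<bar>R\<bar>)"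
        proof (rule sum_mono)
          fix l assume "l \<in> {..<d}"
          then have "\<bar>x l\<bar> \<le> \<bar>R\<bar>" using R x by fastforce
          then show "\<bar>B i j l * x l\<bar> \<le> \<bar>B i j l\<bar> * \<bar>R\<bar>" by (simp add: abs_mult mult_left_mono)
        qed
        finally show ?thesis .
      qed
      also have "\<dots> = (\<Sum>l<d. \<bar>B i j l\<bar>) * \<bar>R\<bar>" by (simp add: sum_distrib_right)
      also have "\<dots> \<le> (\<Sum>j<dd i. \<Sum>l<d. \<bar>B i j l\<bar>) * \<bar>R\<bar>"
        using j by (intro mult_right_mono member_le_sum) (auto intro: sum_nonneg)
      finally show "\<bar>\<Sum>l<d. B i j l * x l\<bar> \<le> Rb i" unfolding Rb_def .
    qed
    then show "Bf i x \<in> S i" unfolding Bf_def S_def matapp_def by (auto simp: abs_le_iff)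
  qed
  have Sm: "\<And>i. S i \<in> sets (N i)" unfolding S_def N_def by (rule box_sets)
  have Sfin: "\<And>i. emeasure (N i) (S i) < \<infinity>" unfolding S_def N_def by (rule box_fin)
  have gmi: "\<And>i. i < k \<Longrightarrow> g i \<in> borel_measurable (N i)" using g_meas unfolding N_def by auto
  have gnni: "\<And>i. i < k \<Longrightarrow> \<forall>y\<in>space (N i). 0 \<le> g i y" using g_nonneg unfolding N_def by auto
  have pushi: "\<And>i. i < k \<Longrightarrow> \<forall>F\<in>borel_measurable (N i). (\<integral>\<^sup>+ y. ennreal (g i y) * F y \<partial>N i) = (\<integral>\<^sup>+ x. indicator \<Omega> x * F (Bf i x) \<partial>M)"
    using g_push unfolding N_def M_def Bf_def by auto
  have gS: "\<And>i. i < k \<Longrightarrow> AE y in N i. y \<notin> S i \<longrightarrow> g i y = 0"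
  proof -
    fix i assume i: "i < k"
    have Dm: "space (N i) - S i \<in> sets (N i)" using Sm by auto
    have "(\<integral>\<^sup>+ y. ennreal (g i y * indicator (space (N i) - S i) y) \<partial>N i)
        = (\<integral>\<^sup>+ x. ennreal (indicator \<Omega> x * indicator (space (N i) - S i) (Bf i x)) \<partial>M)"
      by (rule push_nn[OF gmi[OF i] gnni[OF i] Bf_meas Om pushi[OF i]]) (simp add: Dm borel_measurable_indicator)
    also have "\<dots> = (\<integral>\<^sup>+ x. 0 \<partial>M)"
      using BfS by (intro nn_integral_cong) (auto split: split_indicator)
    also have "\<dots> = 0" by simp
    finally have z: "(\<integral>\<^sup>+ y. ennreal (g i y * indicator (space (N i) - S i) y) \<partial>N i) = 0" .
    have meas: "(\<lambda>y. ennreal (g i y * indicator (space (N i) - S i) y)) \<in> borel_measurable (N i)"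
      using gmi[OF i] Dm by measurable
    have "AE y in N i. ennreal (g i y * indicator (space (N i) - S i) y) = 0"
      using z nn_integral_0_iff_AE[OF meas] by simp
    then show "AE y in N i. y \<notin> S i \<longrightarrow> g i y = 0" using AE_space
    proof eventually_elim
      case (elim y)
      then show ?case using gnni[OF i] by (auto split: split_indicator)
    qed
  qed
  have C: "\<And>i. i < k \<Longrightarrow> 0 < Z i \<and> q i \<in> borel_measurable (N i) \<and> integrable (N i) (q i)
      \<and> (\<integral> y. q i y \<partial>N i) = 1 \<and> (\<forall>y\<in>space (N i). 0 \<le> q i y)
      \<and> (AE x in M. x \<in> \<Omega> \<longrightarrow> 0 < q i (Bf i x))
      \<and> integrable M (\<lambda>x. indicator \<Omega> x * max 0 (- ln (q i (Bf i x))))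
      \<and> (integrable M (\<lambda>x. indicator \<Omega> x * ln (q i (Bf i x))) \<longrightarrow>
          (\<integral> x. indicator \<Omega> x * ln (q i (Bf i x)) \<partial>M) \<ge> - m * Hent (N i) (q i))"
  proof -
    fix i assume i: "i < k"
    have Zi: "Z i = (\<integral> y. g i y powr pp i \<partial>N i)" unfolding Z_def N_def by simp
    have qi: "q i = (\<lambda>y. g i y powr pp i / Z i)" unfolding q_def by simp
    have s1: "0 < pp i" and s2: "pp i \<le> 1" using ppr[OF i] by auto
    note R = component[OF gmi[OF i] gnni[OF i] Bf_meas Om pushi[OF i] m_def mpos mfin s1 s2 Sm Sfin gS[OF i] Zi qi]
    show "?thesis i" using R by blast
  qed

  define F where "F = (\<lambda>x. \<Prod>i<k. q i (Bf i x) powr c i)"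
  have qmi: "\<And>i. i < k \<Longrightarrow> q i \<in> borel_measurable (lebn (dd i))" using C unfolding N_def by blast
  have Fm: "F \<in> borel_measurable (lebn d)"
    unfolding F_def
  proof (rule borel_measurable_prod)
    fix i assume "i \<in> {..<k}"
    then have "(\<lambda>x. q i (Bf i x)) \<in> borel_measurable (lebn d)"
      using measurable_compose[OF matapp_meas qmi] unfolding Bf_def by auto
    then show "(\<lambda>x. q i (Bf i x) powr c i) \<in> borel_measurable (lebn d)" by measurable
  qed
  have FmM[measurable]: "F \<in> borel_measurable M" unfolding M_def using Fm by (rule measurable_completion)
  have Fnn: "\<And>x. 0 \<le> F x" unfolding F_def by (simp add: prod_nonneg)
  have nnF: "(\<integral>\<^sup>+ x. ennreal (F x) \<partial>lebn d) \<le> BL d k dd B c"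
    unfolding BL_def
  proof (rule Inf_greatest)
    fix Cc assume "Cc \<in> {C. \<forall>f :: nat \<Rightarrow> (nat \<Rightarrow> real) \<Rightarrow> real.
     (\<forall>i<k. integrable (lebn (dd i)) (f i) \<and> (\<forall>y\<in>space (lebn (dd i)). 0 \<le> f i y)) \<longrightarrow>
     (\<integral>\<^sup>+ x. ennreal (\<Prod>i<k. f i (matapp d (dd i) (B i) x) powr c i) \<partial>lebn d)
       \<le> C * ennreal (\<Prod>i<k. (\<integral> y. f i y \<partial>lebn (dd i)) powr c i)}"
    then have H: "\<forall>f :: nat \<Rightarrow> (nat \<Rightarrow> real) \<Rightarrow> real.
     (\<forall>i<k. integrable (lebn (dd i)) (f i) \<and> (\<forall>y\<in>space (lebn (dd i)). 0 \<le> f i y)) \<longrightarrow>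
     (\<integral>\<^sup>+ x. ennreal (\<Prod>i<k. f i (matapp d (dd i) (B i) x) powr c i) \<partial>lebn d)
       \<le> Cc * ennreal (\<Prod>i<k. (\<integral> y. f i y \<partial>lebn (dd i)) powr c i)" by simp
    have pr: "\<forall>i<k. integrable (lebn (dd i)) (q i) \<and> (\<forall>y\<in>space (lebn (dd i)). 0 \<le> q i y)"
      using C unfolding N_def by blast
    have one: "(\<Prod>i<k. (\<integral> y. q i y \<partial>lebn (dd i)) powr c i) = 1"
    proof -
      have "(\<Prod>i<k. (\<integral> y. q i y \<partial>lebn (dd i)) powr c i) = (\<Prod>i<k. (1::real))"
        using C unfolding N_def by (intro prod.cong) auto
      then show ?thesis by simp
    qed
    show "(\<integral>\<^sup>+ x. ennreal (F x) \<partial>lebn d) \<le> Cc"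
    proof -
      have "(\<integral>\<^sup>+ x. ennreal (\<Prod>i<k. q i (matapp d (dd i) (B i) x) powr c i) \<partial>lebn d)
       \<le> Cc * ennreal (\<Prod>i<k. (\<integral> y. q i y \<partial>lebn (dd i)) powr c i)"
        using mp[OF spec[OF H, of q] pr] .
      then show ?thesis using one unfolding F_def Bf_def by simp
    qed
  qed
  have nnFO: "(\<integral>\<^sup>+ x. ennreal (indicator \<Omega> x * F x) \<partial>M) \<le> BL d k dd B c"
  proof -
    have "(\<integral>\<^sup>+ x. ennreal (indicator \<Omega> x * F x) \<partial>M) \<le> (\<integral>\<^sup>+ x. ennreal (F x) \<partial>M)"
      using Fnn by (intro nn_integral_mono) (auto split: split_indicator)
    also have "\<dots> = (\<integral>\<^sup>+ x. ennreal (F x) \<partial>lebn d)" unfolding M_def by (rule nn_integral_completion)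
    finally show ?thesis using nnF by simp
  qed
  define \<beta> where "\<beta> = enn2real (BL d k dd B c)"
  have iFO: "integrable M (\<lambda>x. indicator \<Omega> x * F x)"
    using nnFO BL_fin Fnn by (intro integrableI_nonneg) (auto intro!: AE_I2)
  have intFO: "(\<integral> x. indicator \<Omega> x * F x \<partial>M) \<le> \<beta>"
  proof -
    have "(\<integral> x. indicator \<Omega> x * F x \<partial>M) = enn2real (\<integral>\<^sup>+ x. ennreal (indicator \<Omega> x * F x) \<partial>M)"
      using Fnn by (intro integral_eq_nn_integral) (auto intro!: AE_I2)
    also have "\<dots> \<le> \<beta>" unfolding \<beta>_def using nnFO BL_fin by (intro enn2real_mono) auto
    finally show ?thesis .
  qed
  have AEpos: "AE x in M. x \<in> \<Omega> \<longrightarrow> (\<forall>i<k. 0 < q i (Bf i x))"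
  proof -
    have "AE x in M. \<forall>i\<in>{..<k}. x \<in> \<Omega> \<longrightarrow> 0 < q i (Bf i x)"
      by (rule AE_finite_allI) (use C in auto)
    then show ?thesis by (rule eventually_mono) auto
  qed
  have Fpos: "\<And>x. (\<forall>i<k. 0 < q i (Bf i x)) \<Longrightarrow> 0 < F x"
    unfolding F_def by (auto intro!: prod_pos)
  have \<beta>pos: "0 < \<beta>"
  proof (rule ccontr)
    assume "\<not> 0 < \<beta>"
    moreover have "0 \<le> \<beta>" unfolding \<beta>_def by simp
    ultimately have "\<beta> = 0" by linarith
    then have "BL d k dd B c = 0" unfolding \<beta>_def using BL_fin by (auto simp: enn2real_eq_0_iff)
    then have "(\<integral>\<^sup>+ x. ennreal (indicator \<Omega> x * F x) \<partial>M) = 0" using nnFO by simp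
    then have "AE x in M. ennreal (indicator \<Omega> x * F x) = 0"
      by (subst (asm) nn_integral_0_iff_AE) auto
    then have "AE x in M. x \<notin> \<Omega>" using AEpos
    proof eventually_elim
      case (elim x)
      show ?case
      proof
        assume "x \<in> \<Omega>"
        then have "0 < F x" using elim Fpos by auto
        then show False using elim \<open>x \<in> \<Omega>\<close> by simp
      qed
    qed
    then have "emeasure M \<Omega> = 0"
      using AE_iff_measurable[of \<Omega> M "\<lambda>x. x \<notin> \<Omega>"] Osub by auto
    then show False using mpos memM by simp
  qed

  define L where "L = (\<lambda>i x. indicator \<Omega> x * ln (q i (Bf i x)))"
  define Nn where "Nn = (\<lambda>i x. indicator \<Omega> x * max 0 (- ln (q i (Bf i x))))"
  define Rf where "Rf = (\<lambda>x. m / \<beta> * (indicator \<Omega> x * F x) + (ln \<beta> - ln m - 1) * indicator \<Omega> x)"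
  have iInd: "integrable M (indicator \<Omega> :: _ \<Rightarrow> real)" using mfin Om by simp
  have iRf: "integrable M Rf" unfolding Rf_def using iFO iInd by simp
  have iNn: "\<And>i. i < k \<Longrightarrow> integrable M (Nn i)" unfolding Nn_def using C by blast
  have Lm: "\<And>i. i < k \<Longrightarrow> L i \<in> borel_measurable M"
  proof -
    fix i assume i: "i < k"
    have "q i \<in> borel_measurable (N i)" using C[OF i] by blast
    then have "(\<lambda>x. q i (Bf i x)) \<in> borel_measurable M" by (rule measurable_compose[OF Bf_meas])
    then show "L i \<in> borel_measurable M" unfolding L_def by measurable
  qed
  have ptw: "AE x in M. (\<Sum>i<k. c i * L i x) \<le> Rf x"
    using AEpos
  proof eventually_elim
    case (elim x)
    show ?case
    proof (cases "x \<in> \<Omega>")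
      case False
      then show ?thesis unfolding L_def Rf_def by simp
    next
      case True
      then have qp: "\<forall>i<k. 0 < q i (Bf i x)" using elim by simp
      then have Fp: "0 < F x" using Fpos by simp
      have lnF: "ln (F x) = (\<Sum>i<k. c i * L i x)"
        unfolding F_def L_def using True qp
        by (subst ln_prod) (auto simp: ln_powr)
      have "ln (F x * m / \<beta>) \<le> F x * m / \<beta> - 1"
        using Fp mpos \<beta>pos by (intro ln_le_minus_one) simp
      moreover have "ln (F x * m / \<beta>) = ln (F x) + ln m - ln \<beta>"
        using Fp mpos \<beta>pos by (simp add: ln_div ln_mult)
      ultimately have "ln (F x) \<le> F x * m / \<beta> + ln \<beta> - ln m - 1" by simp
      then show ?thesis unfolding Rf_def lnF[symmetric] using True by (simp add: mult.commute)
    qed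
  qed
  have iL: "\<And>j. j < k \<Longrightarrow> integrable M (L j)"
  proof -
    fix j assume j: "j < k"
    have cj: "0 < c j" using c_pos j by simp
    show "integrable M (L j)"
    proof (rule Bochner_Integration.integrable_bound[where f="\<lambda>x. (\<bar>Rf x\<bar> + (\<Sum>i<k. c i * Nn i x)) / c j + Nn j x"])
      show "integrable M (\<lambda>x. (\<bar>Rf x\<bar> + (\<Sum>i<k. c i * Nn i x)) / c j + Nn j x)"
        using iRf iNn j by (intro Bochner_Integration.integrable_add integrable_divide_zero
              Bochner_Integration.integrable_sum integrable_mult_right integrable_abs) auto
      show "L j \<in> borel_measurable M" using Lm j by simp
      show "AE x in M. norm (L j x) \<le> norm ((\<bar>Rf x\<bar> + (\<Sum>i<k. c i * Nn i x)) / c j + Nn j x)"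
        using ptw
      proof eventually_elim
        case (elim x)
        define Pp where "Pp = (\<lambda>i. indicator \<Omega> x * max 0 (ln (q i (Bf i x))))"
        have dec: "\<And>i. L i x = Pp i - Nn i x" unfolding Pp_def L_def Nn_def
          by (auto simp: max_def split: split_indicator)
        have Ppnn: "\<And>i. 0 \<le> Pp i" unfolding Pp_def by (simp split: split_indicator)
        have Nnnn: "\<And>i. 0 \<le> Nn i x" unfolding Nn_def by (simp split: split_indicator)
        have cnn: "\<And>i. i \<in> {..<k} \<Longrightarrow> 0 \<le> c i" using c_pos by (simp add: less_imp_le)
        have "(\<Sum>i<k. c i * L i x) = (\<Sum>i<k. c i * Pp i) - (\<Sum>i<k. c i * Nn i x)"
          unfolding dec by (simp add: right_diff_distrib sum_subtractf)
        then have "(\<Sum>i<k. c i * Pp i) \<le> Rf x + (\<Sum>i<k. c i * Nn i x)" using elim by simp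
        moreover have "c j * Pp j \<le> (\<Sum>i<k. c i * Pp i)"
          using j cnn Ppnn by (intro member_le_sum) auto
        ultimately have "c j * Pp j \<le> \<bar>Rf x\<bar> + (\<Sum>i<k. c i * Nn i x)" by linarith
        then have "Pp j \<le> (\<bar>Rf x\<bar> + (\<Sum>i<k. c i * Nn i x)) / c j" using cj by (simp add: field_simps)
        moreover have "\<bar>L j x\<bar> \<le> Pp j + Nn j x" unfolding dec using Ppnn Nnnn by (simp add: abs_le_iff)
        moreover have "0 \<le> (\<Sum>i<k. c i * Nn i x)" using cnn Nnnn by (intro sum_nonneg) simp
        ultimately show ?case using cj Nnnn[of j] by simp
      qed
    qed
  qed
  have LH: "\<And>i. i < k \<Longrightarrow> (\<integral> x. L i x \<partial>M) \<ge> - m * Hent (N i) (q i)"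
    using C iL unfolding L_def by blast
  have "(\<Sum>i<k. c i * (\<integral> x. L i x \<partial>M)) = (\<integral> x. (\<Sum>i<k. c i * L i x) \<partial>M)"
    using iL by (simp add: Bochner_Integration.integral_sum)
  also have "\<dots> \<le> (\<integral> x. Rf x \<partial>M)"
    using iL iRf ptw by (intro integral_mono_AE) auto
  also have "\<dots> = m / \<beta> * (\<integral> x. indicator \<Omega> x * F x \<partial>M) + (ln \<beta> - ln m - 1) * m"
  proof -
    have "(\<integral> x. indicator \<Omega> x \<partial>M) = m" unfolding m_def using Osub by (simp add: Int_absorb2)
    then show ?thesis unfolding Rf_def using iFO iInd by simp
  qed
  also have "\<dots> \<le> m / \<beta> * \<beta> + (ln \<beta> - ln m - 1) * m"
  proof -
    have "m / \<beta> * (\<integral> x. indicator \<Omega> x * F x \<partial>M) \<le> m / \<beta> * \<beta>"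
      using intFO mpos \<beta>pos by (intro mult_left_mono) auto
    then show ?thesis by linarith
  qed
  also have "\<dots> = m * (ln \<beta> - ln m)" using \<beta>pos by (simp add: field_simps)
  finally have A: "(\<Sum>i<k. c i * (\<integral> x. L i x \<partial>M)) \<le> m * (ln \<beta> - ln m)" .
  have "(\<Sum>i<k. c i * (- m * Hent (N i) (q i))) \<le> (\<Sum>i<k. c i * (\<integral> x. L i x \<partial>M))"
    using LH c_pos by (intro sum_mono mult_left_mono) (auto simp: less_imp_le)
  moreover have "(\<Sum>i<k. c i * (- m * Hent (N i) (q i))) = m * (- (\<Sum>i<k. c i * Hent (N i) (q i)))"
    by (simp add: sum_distrib_left sum_negf algebra_simps)
  ultimately have "m * (- (\<Sum>i<k. c i * Hent (N i) (q i))) \<le> m * (ln \<beta> - ln m)"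
    using A by linarith
  then have "- (\<Sum>i<k. c i * Hent (N i) (q i)) \<le> ln \<beta> - ln m" using mpos
    by (rule mult_left_le_imp_le)
  then have main: "ln m \<le> ln \<beta> + (\<Sum>i<k. c i * Hent (N i) (q i))" by simp
  have lhs: "Hent M (\<lambda>x. (indicator \<Omega> x :: real) powr p / (\<integral> z. (indicator \<Omega> z :: real) powr p \<partial>M)) = ln m"
  proof -
    have ip: "\<And>x. (indicator \<Omega> x :: real) powr p = indicator \<Omega> x" by (simp split: split_indicator)
    have im: "(\<integral> x. indicator \<Omega> x \<partial>M) = m" unfolding m_def using Osub by (simp add: Int_absorb2)
    have "Hent M (\<lambda>x. (indicator \<Omega> x :: real) powr p / (\<integral> z. (indicator \<Omega> z :: real) powr p \<partial>M))
        = (\<integral> x. indicator \<Omega> x * (ln m / m) \<partial>M)"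
      unfolding Hent_def ip im using mpos by (intro Bochner_Integration.integral_cong) (auto split: split_indicator)
    also have "\<dots> = ln m" using im mpos by simp
    finally show ?thesis .
  qed
  have rhs: "(\<Sum>i<k. c i * Hent (lebn (dd i)) (\<lambda>y. g i y powr pp i / (\<integral> z. g i z powr pp i \<partial>lebn (dd i))))
      = (\<Sum>i<k. c i * Hent (N i) (q i))" unfolding N_def q_def Z_def by simp
  show ?thesis using main lhs rhs unfolding M_def \<beta>_def by simp
qed


end
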